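(* An orientation of a graph $G$ admits a homogeneous labeling if and only if it contains no badly oriented cycle.
   Context: Given an orientation of a (simple) graph $G$, a homogeneous labeling is an assignment of real labels to the arcs such that for every vertex all its outgoing arcs have the same label, all its incoming arcs have the same label, and (if both exist) the label of its incoming arcs is smaller than the label of its outgoing arcs. A cycle $(v_0,v_1,\ldots,v_{n-1})$ of $G$ (indices mod $n$) is badly oriented if there is a vertex $v_i$ whose incident cycle arcs are $v_{i-1}v_i$ and $v_iv_{i+1}$ (i.e. oriented from $v_{i-1}$ to $v_i$ and from $v_i$ to $v_{i+1}$), and there is no vertex $v_j$ whose incident cycle arcs are $v_{j+1}v_j$ and $v_jv_{j-1}$. *)

theory Defs
  imports Complex_Main
begin

definition simple_graph :: "'a set \<Rightarrow> ('a \<times> 'a) set \<Rightarrow> bool" where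
  "simple_graph V E \<longleftrightarrow> finite V \<and> E \<subseteq> V \<times> V \<and> sym E \<and> irrefl E"

definition orientation :: "'a set \<Rightarrow> ('a \<times> 'a) set \<Rightarrow> ('a \<times> 'a) set \<Rightarrow> bool" where
  "orientation V E A \<longleftrightarrow> A \<subseteq> E \<and> (\<forall>u v. (u, v) \<in> E \<longrightarrow> ((u, v) \<in> A \<longleftrightarrow> (v, u) \<notin> A))"

definition homogeneous_labeling :: "('a \<times> 'a) set \<Rightarrow> ('a \<times> 'a \<Rightarrow> real) \<Rightarrow> bool" where
  "homogeneous_labeling A f \<longleftrightarrow>
     (\<forall>v. (\<forall>w w'. (v, w) \<in> A \<longrightarrow> (v, w') \<in> A \<longrightarrow> f (v, w) = f (v, w'))
        \<and> (\<forall>u u'. (u, v) \<in> A \<longrightarrow> (u', v) \<in> A \<longrightarrow> f (u, v) = f (u', v))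
        \<and> (\<forall>u w. (u, v) \<in> A \<longrightarrow> (v, w) \<in> A \<longrightarrow> f (u, v) < f (v, w)))"

definition is_cycle :: "('a \<times> 'a) set \<Rightarrow> 'a list \<Rightarrow> bool" where
  "is_cycle E cs \<longleftrightarrow> length cs \<ge> 3 \<and> distinct cs \<and>
     (\<forall>i < length cs. (cs ! i, cs ! ((i + 1) mod length cs)) \<in> E)"

definition badly_oriented :: "('a \<times> 'a) set \<Rightarrow> 'a list \<Rightarrow> bool" where
  "badly_oriented A cs \<longleftrightarrow>
     (let n = length cs; nx = (\<lambda>i. cs ! ((i + 1) mod n)); pv = (\<lambda>i. cs ! ((i + n - 1) mod n)) in
       (\<exists>i < n. (pv i, cs ! i) \<in> A \<and> (cs ! i, nx i) \<in> A) \<and>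
       \<not> (\<exists>j < n. (nx j, cs ! j) \<in> A \<and> (cs ! j, pv j) \<in> A))"

end

theory Submission
  imports Defs
begin


fun FF :: "('a \<times> 'a) set \<Rightarrow> 'a \<times> 'a \<times> 'a \<Rightarrow> bool" where
  "FF A (p, x, q) = ((p, x) \<in> A \<and> (x, q) \<in> A)"
fun BB :: "('a \<times> 'a) set \<Rightarrow> 'a \<times> 'a \<times> 'a \<Rightarrow> bool" where
  "BB A (p, x, q) = ((q, x) \<in> A \<and> (x, p) \<in> A)"
fun EW :: "('a \<times> 'a) set \<Rightarrow> 'a \<times> 'a \<times> 'a \<Rightarrow> bool" where
  "EW E (p, x, q) = ((p, x) \<in> E \<and> (x, q) \<in> E)"

definition W :: "'a list \<Rightarrow> nat \<Rightarrow> 'a \<times> 'a \<times> 'a" where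
  "W cs i = (cs ! ((i + length cs - 1) mod length cs), cs ! i, cs ! ((i + 1) mod length cs))"
definition CW :: "'a list \<Rightarrow> ('a \<times> 'a \<times> 'a) set" where
  "CW cs = W cs ` {..<length cs}"

definition Good :: "('a \<times> 'a) set \<Rightarrow> ('a \<times> 'a) set \<Rightarrow> 'a list \<Rightarrow> bool" where
  "Good E A cs \<longleftrightarrow> cs \<noteq> [] \<and> (\<forall>t\<in>CW cs. EW E t) \<and> (\<exists>t\<in>CW cs. FF A t) \<and> (\<forall>t\<in>CW cs. \<not> BB A t)"

lemma bo_iff: "badly_oriented A cs \<longleftrightarrow> (\<exists>t\<in>CW cs. FF A t) \<and> \<not> (\<exists>t\<in>CW cs. BB A t)"
  unfolding badly_oriented_def CW_def W_def Let_def by auto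

lemma ori_facts:
  assumes "orientation V E A"
  shows "A \<subseteq> E" "\<And>u v. (u, v) \<in> E \<Longrightarrow> (u, v) \<in> A \<or> (v, u) \<in> A"
    "\<And>u v. (u, v) \<in> A \<Longrightarrow> (v, u) \<notin> A"
  using assms unfolding orientation_def by blast+

lemma window_mono:
  assumes "orientation V E A" "sym E" "homogeneous_labeling A f"
    and "(p, x) \<in> E" "(x, q) \<in> E" "\<not> BB A (p, x, q)"
  defines "lab \<equiv> (\<lambda>(u, v). if (u, v) \<in> A then f (u, v) else f (v, u))"
  shows "lab (p, x) \<le> lab (x, q) \<and> (FF A (p, x, q) \<longrightarrow> lab (p, x) < lab (x, q))"
proof -
  note o = ori_facts[OF assms(1)]
  have h: "\<And>v w w'. (v, w) \<in> A \<Longrightarrow> (v, w') \<in> A \<Longrightarrow> f (v, w) = f (v, w')"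
    "\<And>v u u'. (u, v) \<in> A \<Longrightarrow> (u', v) \<in> A \<Longrightarrow> f (u, v) = f (u', v)"
    "\<And>v u w. (u, v) \<in> A \<Longrightarrow> (v, w) \<in> A \<Longrightarrow> f (u, v) < f (v, w)"
    using assms(3) unfolding homogeneous_labeling_def by blast+
  show ?thesis
  proof (cases "(p, x) \<in> A")
    case px: True
    show ?thesis
    proof (cases "(x, q) \<in> A")
      case True
      then show ?thesis using px h(3)[of p x q] unfolding lab_def by simp
    next
      case False
      then have "(q, x) \<in> A" using o(2)[OF assms(5)] by blast
      then show ?thesis using px False h(2)[of p x q] unfolding lab_def by simp
    qed
  next
    case px: False
    then have xp: "(x, p) \<in> A" using o(2)[OF assms(4)] by blast
    show ?thesis
    proof (cases "(x, q) \<in> A")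
      case True
      then show ?thesis using px xp h(1)[of x p q] unfolding lab_def by simp
    next
      case False
      then have "(q, x) \<in> A" using o(2)[OF assms(5)] by blast
      then show ?thesis using xp assms(6) by simp
    qed
  qed
qed

lemma necessity:
  assumes "orientation V E A" "sym E" "homogeneous_labeling A f"
    and "is_cycle E cs" "badly_oriented A cs"
  shows False
proof -
  define n where "n = length cs"
  have n3: "n \<ge> 3" using assms(4) unfolding is_cycle_def n_def by auto
  define lab where "lab \<equiv> (\<lambda>(u, v). if (u, v) \<in> A then f (u, v) else f (v, u))"
  define h where "h k = lab (cs ! (k mod n), cs ! ((k + 1) mod n))" for k
  have edge: "(cs ! (k mod n), cs ! ((k + 1) mod n)) \<in> E" for k
  proof -
    have "k mod n < n" using n3 by auto
    then have "(cs ! (k mod n), cs ! ((k mod n + 1) mod n)) \<in> E"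
      using assms(4) unfolding is_cycle_def n_def by auto
    then show ?thesis by (simp add: mod_simps)
  qed
  have Wk: "W cs ((k + 1) mod n) = (cs ! (k mod n), cs ! ((k + 1) mod n), cs ! ((k + 2) mod n))" for k
  proof -
    have a: "((k + 1) mod n + n - 1) mod n = k mod n"
    proof -
      have "(k + 1) mod n + n - 1 = (k + 1) mod n + (n - 1)" using n3 by auto
      then have "((k + 1) mod n + n - 1) mod n = (k + 1 + (n - 1)) mod n" by (simp add: mod_simps)
      also have "k + 1 + (n - 1) = k + n" using n3 by auto
      finally show ?thesis by simp
    qed
    have b: "((k + 1) mod n + 1) mod n = (k + 2) mod n" by (simp add: mod_simps)
    show ?thesis unfolding W_def n_def[symmetric] a b by simp
  qed
  have inCW: "W cs ((k + 1) mod n) \<in> CW cs" for k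
  proof -
    have "(k + 1) mod n < n" using n3 by simp
    then show ?thesis unfolding CW_def n_def by (intro imageI) simp
  qed
  obtain noBB: "\<forall>t\<in>CW cs. \<not> BB A t" and "\<exists>t\<in>CW cs. FF A t"
    using assms(5) bo_iff by blast
  then obtain i where i: "i < n" "FF A (W cs i)" unfolding CW_def n_def by auto
  have step: "h k \<le> h (Suc k) \<and> (FF A (W cs ((k + 1) mod n)) \<longrightarrow> h k < h (Suc k))" for k
  proof -
    have "(cs ! ((k + 1) mod n), cs ! ((k + 2) mod n)) \<in> E"
      using edge[of "k+1"] by (simp add: add.assoc)
    moreover have "\<not> BB A (cs ! (k mod n), cs ! ((k + 1) mod n), cs ! ((k + 2) mod n))"
      using noBB inCW[of k] Wk[of k] by metis
    ultimately have "lab (cs ! (k mod n), cs ! ((k + 1) mod n)) \<le> lab (cs ! ((k + 1) mod n), cs ! ((k + 2) mod n)) \<and>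
      (FF A (cs ! (k mod n), cs ! ((k + 1) mod n), cs ! ((k + 2) mod n)) \<longrightarrow>
        lab (cs ! (k mod n), cs ! ((k + 1) mod n)) < lab (cs ! ((k + 1) mod n), cs ! ((k + 2) mod n)))"
      using window_mono[OF assms(1,2,3) edge[of k]] unfolding lab_def by blast
    moreover have "h (Suc k) = lab (cs ! ((k + 1) mod n), cs ! ((k + 2) mod n))"
      unfolding h_def by (simp add: mod_simps add.commute)
    ultimately show ?thesis unfolding h_def Wk by simp
  qed
  define k where "k = i + n - 1"
  have ik: "(k + 1) mod n = i" using i n3 unfolding k_def by auto
  have "h k < h (Suc k)" using step[of k] i(2) ik by simp
  also have "h (Suc k) \<le> h (k + n)"
    using lift_Suc_mono_le[of h "Suc k" "k + n"] step n3 by auto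
  also have "h (k + n) = h k"
  proof -
    have "k + n + 1 = (k + 1) + n" by simp
    then have "(k + n + 1) mod n = (k + 1) mod n" by (metis mod_add_self2)
    then show ?thesis unfolding h_def by simp
  qed
  finally show False by simp
qed

lemma mod_image_shift:
  assumes "0 < (n::nat)"
  shows "(\<lambda>k. (i + k) mod n) ` {..<n} = {..<n}"
proof
  show "(\<lambda>k. (i + k) mod n) ` {..<n} \<subseteq> {..<n}" using assms by auto
  show "{..<n} \<subseteq> (\<lambda>k. (i + k) mod n) ` {..<n}"
  proof
    fix j assume j: "j \<in> {..<n}"
    define k where "k = (n - i mod n + j) mod n"
    have "(i + k) mod n = (i + (n - i mod n + j)) mod n" unfolding k_def by (simp add: mod_simps)
    also have "i + (n - i mod n + j) = (i div n) * n + n + j"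
      using assms mod_less_divisor[OF assms, of i] div_mult_mod_eq[of i n] by linarith
    also have "(i div n) * n + n + j = j + (i div n + 1) * n" by (simp add: algebra_simps)
    also have "(j + (i div n + 1) * n) mod n = j" by (subst mod_mult_self1) (use j in simp)
    finally show "j \<in> (\<lambda>k. (i + k) mod n) ` {..<n}" unfolding k_def using assms
      by (metis (no_types, lifting) image_eqI k_def lessThan_iff mod_less_divisor)
  qed
qed

lemma CW_rotate: "CW (rotate i cs) = CW cs"
proof (cases "cs = []")
  case True then show ?thesis by simp
next
  case False
  define n where "n = length cs"
  have n: "0 < n" using False n_def by auto
  have Wr: "W (rotate i cs) k = W cs ((i + k) mod n)" if k: "k < n" for k
  proof -
    have a: "(i + (k + n - 1) mod n) mod n = ((i + k) mod n + n - 1) mod n"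
    proof -
      have "(i + (k + n - 1) mod n) mod n = (i + (k + n - 1)) mod n" by (simp add: mod_simps)
      also have "i + (k + n - 1) = (i + k) + (n - 1)" using n by auto
      also have "((i + k) + (n - 1)) mod n = ((i + k) mod n + (n - 1)) mod n" by (simp add: mod_simps)
      also have "(i + k) mod n + (n - 1) = (i + k) mod n + n - 1" using n by auto
      finally show ?thesis .
    qed
    have b: "(i + (k + 1) mod n) mod n = ((i + k) mod n + 1) mod n" by (simp add: mod_simps add.assoc)
    show ?thesis unfolding W_def length_rotate n_def[symmetric]
      using n k by (simp add: nth_rotate n_def[symmetric] a b del: One_nat_def)
  qed
  have "CW (rotate i cs) = (\<lambda>k. W cs ((i + k) mod n)) ` {..<n}"
    unfolding CW_def length_rotate n_def[symmetric] using Wr by auto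
  also have "\<dots> = W cs ` ((\<lambda>k. (i + k) mod n) ` {..<n})" by (simp add: image_image)
  also have "\<dots> = CW cs" using mod_image_shift[OF n] unfolding CW_def n_def by simp
  finally show ?thesis .
qed

lemma Good_rotate: "Good E A (rotate i cs) = Good E A cs"
  unfolding Good_def CW_rotate by simp



lemma modprev: "0 < k \<Longrightarrow> k < (m::nat) \<Longrightarrow> (k + m - 1) mod m = k - 1"
proof -
  assume "0 < k" "k < m"
  then have "k + m - 1 = (k - 1) + m" by auto
  then have "(k + m - 1) mod m = ((k - 1) + m) mod m" by (simp only:)
  also have "\<dots> = (k - 1) mod m" by (rule mod_add_self2)
  also have "\<dots> = k - 1" using \<open>k < m\<close> by simp
  finally show ?thesis .
qed

lemma ori_rules:
  assumes "orientation V E A"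
  shows "\<And>u v. (u, v) \<in> E \<Longrightarrow> (u, v) \<notin> A \<Longrightarrow> (v, u) \<in> A"
    "\<And>u v. (u, v) \<in> A \<Longrightarrow> (v, u) \<in> A \<Longrightarrow> False"
  using ori_facts(2,3)[OF assms] by metis+

lemma split_walk:
  assumes ori: "orientation V E A" and symE: "sym E" and irr: "irrefl E"
    and G: "Good E A cs" and j: "0 < j" "j < length cs" and eqx: "cs ! 0 = cs ! j"
  shows "\<exists>cs'. Good E A cs' \<and> length cs' < length cs"
proof -
  define n where "n = length cs"
  define x where "x = cs ! 0"
  have n2: "n \<ge> 2" using j n_def by auto
  have inCW: "W cs k \<in> CW cs" if "k < n" for k using that unfolding CW_def n_def by auto
  have noBB: "\<And>t. t \<in> CW cs \<Longrightarrow> \<not> BB A t" and EWa: "\<And>t. t \<in> CW cs \<Longrightarrow> EW E t"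
    and FFex: "\<exists>t\<in>CW cs. FF A t" using G unfolding Good_def by auto
  have irrE: "(u, u) \<notin> E" for u using irr unfolding irrefl_def by auto
  have W0: "W cs 0 = (cs ! (n - 1), x, cs ! 1)"
    unfolding W_def n_def[symmetric] x_def using n2 by simp
  have E0: "(x, cs ! 1) \<in> E" using EWa[OF inCW[of 0]] W0 n2 by auto
  have j2: "j \<ge> 2"
  proof (rule ccontr)
    assume "\<not> j \<ge> 2" then have "j = 1" using j by auto
    then show False using E0 eqx irrE unfolding x_def by auto
  qed
  have jn: "j + 1 < n"
  proof (rule ccontr)
    assume "\<not> j + 1 < n" then have jj: "j + 1 = n" using j n_def by auto
    have m: "(j + n - 1) mod n = j - 1" using j jj by (intro modprev) auto
    have "W cs j = (cs ! (j - 1), cs ! j, cs ! 0)"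
      unfolding W_def n_def[symmetric] m using jj j by simp
    then have "(cs ! j, cs ! 0) \<in> E" using EWa[OF inCW[of j]] jj by auto
    then show False using eqx irrE by auto
  qed
  define a where "a = cs ! (n - 1)"
  define b where "b = cs ! 1"
  define c where "c = cs ! (j - 1)"
  define d where "d = cs ! (j + 1)"
  have Wa: "W cs 0 = (a, x, b)" using W0 a_def b_def by simp
  have mj: "(j + n - 1) mod n = j - 1" using j jn by (intro modprev) auto
  have Wj: "W cs j = (c, x, d)"
    unfolding W_def n_def[symmetric] c_def d_def x_def eqx mj using j2 jn by simp
  define w1 where "w1 = take j cs"
  define w2 where "w2 = drop j cs"
  have l1: "length w1 = j" unfolding w1_def using j by simp
  have l2: "length w2 = n - j" unfolding w2_def n_def by simp
  have n1: "w1 ! k = cs ! k" if "k < j" for k using that unfolding w1_def by simp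
  have n2': "w2 ! k = cs ! (j + k)" if "k < n - j" for k using that unfolding w2_def n_def by simp
  have W10: "W w1 0 = (c, x, b)"
    unfolding W_def l1 using j2 by (simp add: n1 c_def b_def x_def)
  have W1k: "W w1 k = W cs k" if "0 < k" "k < j" for k
  proof -
    have p: "w1 ! ((k + j - 1) mod j) = cs ! ((k + n - 1) mod n)"
    proof -
      have "(k + j - 1) mod j = k - 1" using that by (intro modprev) auto
      moreover have "(k + n - 1) mod n = k - 1" using that j n_def by (intro modprev) auto
      ultimately show ?thesis using that by (simp add: n1)
    qed
    have q: "w1 ! ((k + 1) mod j) = cs ! ((k + 1) mod n)"
    proof (cases "k + 1 < j")
      case True then show ?thesis using jn by (simp add: n1)
    next
      case False then have "k + 1 = j" using that by auto
      then show ?thesis using jn j by (simp add: n1 eqx)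
    qed
    show ?thesis unfolding W_def l1 n_def[symmetric] p q using that by (simp add: n1)
  qed
  have W20: "W w2 0 = (a, x, d)"
  proof -
    have "(n - j - 1) < n - j" using jn by auto
    then have "w2 ! ((0 + (n - j) - 1) mod (n - j)) = cs ! (n - 1)"
      using jn by (simp add: n2')
    moreover have "w2 ! ((0 + 1) mod (n - j)) = cs ! (j + 1)"
    proof -
      have "(0 + 1) mod (n - j) = 1" using jn by simp
      then show ?thesis using jn n2'[of 1] by simp
    qed
    moreover have "w2 ! 0 = x" using jn by (simp add: n2' x_def eqx)
    ultimately show ?thesis unfolding W_def l2 a_def d_def by simp
  qed
  have W2k: "W w2 k = W cs (j + k)" if "0 < k" "k < n - j" for k
  proof -
    have p: "w2 ! ((k + (n - j) - 1) mod (n - j)) = cs ! ((j + k + n - 1) mod n)"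
    proof -
      have "(k + (n - j) - 1) mod (n - j) = k - 1" using that by (rule modprev)
      moreover have "(j + k + n - 1) mod n = j + k - 1" using that by (intro modprev) auto
      ultimately show ?thesis using that by (simp add: n2')
    qed
    have q: "w2 ! ((k + 1) mod (n - j)) = cs ! ((j + k + 1) mod n)"
    proof (cases "k + 1 < n - j")
      case True then show ?thesis by (simp add: n2')
    next
      case False then have "k + 1 = n - j" using that by auto
      then have "j + k + 1 = n" using jn by auto
      then show ?thesis using \<open>k + 1 = n - j\<close> jn by (simp add: n2' eqx)
    qed
    show ?thesis unfolding W_def l2 n_def[symmetric] p q using that by (simp add: n2' add.assoc)
  qed
  have CW1: "CW w1 \<subseteq> insert (c, x, b) (CW cs)"
  proof
    fix t assume "t \<in> CW w1"
    then obtain k where k: "k < j" "t = W w1 k" unfolding CW_def l1 by auto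
    show "t \<in> insert (c, x, b) (CW cs)"
    proof (cases "k = 0")
      case True then show ?thesis using k W10 by simp
    next
      case False then show ?thesis using k W1k[of k] inCW[of k] jn by auto
    qed
  qed
  have CW2: "CW w2 \<subseteq> insert (a, x, d) (CW cs)"
  proof
    fix t assume "t \<in> CW w2"
    then obtain k where k: "k < n - j" "t = W w2 k" unfolding CW_def l2 by auto
    show "t \<in> insert (a, x, d) (CW cs)"
    proof (cases "k = 0")
      case True then show ?thesis using k W20 by simp
    next
      case False then show ?thesis using k W2k[of k] inCW[of "j + k"] by auto
    qed
  qed
  have CWall: "CW cs \<subseteq> CW w1 \<union> CW w2 \<union> {(a, x, b), (c, x, d)}"
  proof
    fix t assume "t \<in> CW cs"
    then obtain k where k: "k < n" "t = W cs k" unfolding CW_def n_def by auto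
    consider "k = 0" | "0 < k \<and> k < j" | "k = j" | "j < k" by linarith
    then show "t \<in> CW w1 \<union> CW w2 \<union> {(a, x, b), (c, x, d)}"
    proof cases
      case 1 then show ?thesis using k Wa by simp
    next
      case 2
      then have "W w1 k \<in> CW w1" unfolding CW_def l1 by auto
      then show ?thesis using k 2 W1k[of k] by auto
    next
      case 3 then show ?thesis using k Wj by simp
    next
      case 4
      then have "W w2 (k - j) \<in> CW w2" unfolding CW_def l2 using k by auto
      then show ?thesis using k 4 W2k[of "k - j"] by auto
    qed
  qed
  have Eab: "EW E (a, x, b)" using EWa[OF inCW[of 0]] Wa n2 by simp
  have Ecd: "EW E (c, x, d)" using EWa[OF inCW[of j]] Wj jn by simp
  have Bab: "\<not> BB A (a, x, b)" using noBB[OF inCW[of 0]] Wa n2 by simp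
  have Bcd: "\<not> BB A (c, x, d)" using noBB[OF inCW[of j]] Wj jn by simp
  have ne1: "w1 \<noteq> []" using l1 j by auto
  have ne2: "w2 \<noteq> []" using l2 jn by auto
  have EW1: "\<forall>t\<in>CW w1. EW E t" using CW1 EWa Eab Ecd by fastforce
  have EW2: "\<forall>t\<in>CW w2. EW E t" using CW2 EWa Eab Ecd by fastforce
  have len1: "length w1 < length cs" using l1 j by simp
  have len2: "length w2 < length cs" using l2 j n_def by simp
  note O = ori_rules[OF ori]
  have "Good E A w1 \<or> Good E A w2"
  proof (cases "BB A (c, x, b)")
    case True
    then have "(a, x) \<in> A" "(x, d) \<in> A" using Bab Bcd Eab Ecd O by auto
    then have "FF A (a, x, d)" "\<not> BB A (a, x, d)" using O by auto
    then have "Good E A w2" unfolding Good_def using ne2 EW2 CW2 noBB W20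
      by (metis (no_types, lifting) insert_iff l2 CW_def imageI lessThan_iff subsetD jn zero_less_diff
          add_lessD1)
    then show ?thesis ..
  next
    case F1: False
    show ?thesis
    proof (cases "BB A (a, x, d)")
      case True
      then have "(c, x) \<in> A" "(x, b) \<in> A" using Bab Bcd Eab Ecd O by auto
      then have "FF A (c, x, b)" "\<not> BB A (c, x, b)" using O by auto
      then have "Good E A w1" unfolding Good_def using ne1 EW1 CW1 noBB W10
        by (metis (no_types, lifting) insert_iff l1 CW_def imageI lessThan_iff subsetD j)
      then show ?thesis ..
    next
      case F2: False
      have nb1: "\<forall>t\<in>CW w1. \<not> BB A t" using CW1 noBB F1 by blast
      have nb2: "\<forall>t\<in>CW w2. \<not> BB A t" using CW2 noBB F2 by blast
      have i1: "(c, x, b) \<in> CW w1" using W10 j unfolding CW_def l1 by (metis imageI lessThan_iff)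
      have i2: "(a, x, d) \<in> CW w2" using W20 jn unfolding CW_def l2
        by (metis imageI lessThan_iff zero_less_diff add_lessD1)
      from FFex obtain t where t: "t \<in> CW cs" "FF A t" by blast
      have "(\<exists>t\<in>CW w1. FF A t) \<or> (\<exists>t\<in>CW w2. FF A t)"
      proof -
        have "t \<in> CW w1 \<or> t \<in> CW w2 \<or> t = (a, x, b) \<or> t = (c, x, d)" using CWall t by blast
        moreover have "FF A (c, x, b) \<or> FF A (a, x, d)" if "t = (a, x, b)"
          using that t(2) Bab Bcd Eab Ecd O by auto
        moreover have "FF A (c, x, b) \<or> FF A (a, x, d)" if "t = (c, x, d)"
          using that t(2) Bab Bcd Eab Ecd O by auto
        ultimately show ?thesis using t i1 i2 by blast
      qed
      then show ?thesis unfolding Good_def using ne1 ne2 EW1 EW2 nb1 nb2 by blast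
    qed
  qed
  then show ?thesis using len1 len2 by blast
qed

lemma extract_cycle:
  assumes ori: "orientation V E A" and symE: "sym E" and irr: "irrefl E"
  shows "Good E A cs \<Longrightarrow> \<exists>cs'. Good E A cs' \<and> distinct cs'"
proof (induction "length cs" arbitrary: cs rule: less_induct)
  case less
  show ?case
  proof (cases "distinct cs")
    case True then show ?thesis using less.prems by blast
  next
    case False
    then obtain i j where ij: "i < length cs" "j < length cs" "i \<noteq> j" "cs ! i = cs ! j"
      by (auto simp: distinct_conv_nth)
    then obtain i j where ij: "i < j" "j < length cs" "cs ! i = cs ! j"
      by (metis linorder_neqE_nat)
    define r where "r = rotate i cs"
    have Gr: "Good E A r" using less.prems Good_rotate r_def by metis
    have lr: "length r = length cs" unfolding r_def by simp
    have cne: "cs \<noteq> []" using ij by auto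
    have "r ! 0 = cs ! i" unfolding r_def using cne using ij nth_rotate[of 0 cs i] by simp
    moreover have "r ! (j - i) = cs ! j" unfolding r_def using ij cne nth_rotate[of "j - i" cs i] by simp
    ultimately have eq: "r ! 0 = r ! (j - i)" using ij by simp
    have "\<exists>cs'. Good E A cs' \<and> length cs' < length r"
      by (rule split_walk[OF ori symE irr Gr, of "j - i"]) (use ij lr eq in auto)
    then obtain cs' where "Good E A cs'" "length cs' < length cs" using lr by auto
    then show ?thesis using less.hyps by blast
  qed
qed



lemma good_cycle:
  assumes sg: "simple_graph V E" and ori: "orientation V E A" and G: "Good E A cs"
    and dis: "distinct cs"
  shows "set cs \<subseteq> V \<and> is_cycle E cs \<and> badly_oriented A cs"
proof -
  define n where "n = length cs"
  have n0: "0 < n" using G unfolding Good_def n_def by auto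
  have EWa: "\<And>t. t \<in> CW cs \<Longrightarrow> EW E t" and FFex: "\<exists>t\<in>CW cs. FF A t"
    and noBB: "\<And>t. t \<in> CW cs \<Longrightarrow> \<not> BB A t" using G unfolding Good_def by auto
  have EV: "E \<subseteq> V \<times> V" and irr: "irrefl E" using sg unfolding simple_graph_def by auto
  have inCW: "W cs k \<in> CW cs" if "k < n" for k using that unfolding CW_def n_def by auto
  have edge: "(cs ! i, cs ! ((i + 1) mod n)) \<in> E" if "i < n" for i
    using EWa[OF inCW[OF that]] unfolding W_def n_def by simp
  have sV: "set cs \<subseteq> V"
  proof
    fix y assume "y \<in> set cs"
    then obtain i where "i < n" "y = cs ! i" unfolding n_def by (auto simp: in_set_conv_nth)
    then show "y \<in> V" using edge[of i] EV by auto
  qed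
  have n1: "n \<noteq> 1"
  proof
    assume "n = 1"
    then have "(cs ! 0, cs ! 0) \<in> E" using edge[of 0] by simp
    then show False using irr unfolding irrefl_def by auto
  qed
  have n2: "n \<noteq> 2"
  proof
    assume n2: "n = 2"
    from FFex obtain i where i: "i < n" "FF A (W cs i)" unfolding CW_def n_def by auto
    note O = ori_facts(3)[OF ori]
    show False
    proof (cases "i = 0")
      case True
      then have "W cs i = (cs ! 1, cs ! 0, cs ! 1)" unfolding W_def n_def[symmetric] n2 by simp
      then show False using i(2) O by auto
    next
      case False
      then have "i = 1" using i n2 by auto
      then have "W cs i = (cs ! 0, cs ! 1, cs ! 0)" unfolding W_def n_def[symmetric] n2 by simp
      then show False using i(2) O by auto
    qed
  qed
  have "n \<ge> 3" using n0 n1 n2 by linarith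
  then have "length cs \<ge> 3" using n_def by simp
  then have "is_cycle E cs" unfolding is_cycle_def using dis edge n_def by auto
  moreover have "badly_oriented A cs" using bo_iff FFex noBB by blast
  ultimately show ?thesis using sV by blast
qed

definition owalk :: "('a \<times> 'a) set \<Rightarrow> ('a \<times> 'a) set \<Rightarrow> 'a list \<Rightarrow> bool" where
  "owalk E A l \<longleftrightarrow> 2 \<le> length l \<and> (\<forall>k. Suc k < length l \<longrightarrow> (l ! k, l ! Suc k) \<in> E) \<and>
     (\<forall>c. 0 < c \<longrightarrow> Suc c < length l \<longrightarrow> \<not> BB A (l ! (c - 1), l ! c, l ! Suc c))"

definition ffs :: "('a \<times> 'a) set \<Rightarrow> 'a list \<Rightarrow> nat set" where
  "ffs A l = {c. 0 < c \<and> Suc c < length l \<and> FF A (l ! (c - 1), l ! c, l ! Suc c)}"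

definition ends :: "'a list \<Rightarrow> 'a \<Rightarrow> 'a \<Rightarrow> bool" where
  "ends l u v \<longleftrightarrow> 2 \<le> length l \<and> l ! (length l - 2) = u \<and> l ! (length l - 1) = v"

lemma ffs_finite: "finite (ffs A l)"
  by (rule finite_subset[of _ "{..<length l}"]) (auto simp: ffs_def)

lemma owalk_snoc:
  assumes ow: "owalk E A l" and en: "ends l u v" and vw: "(v, w) \<in> E" and nb: "\<not> BB A (u, v, w)"
  shows "owalk E A (l @ [w])" "ends (l @ [w]) v w"
    "ffs A (l @ [w]) = ffs A l \<union> (if FF A (u, v, w) then {length l - 1} else {})"
proof -
  define N where "N = length l"
  have N2: "N \<ge> 2" using en unfolding ends_def N_def by auto
  have nl: "(l @ [w]) ! k = l ! k" if "k < N" for k using that unfolding N_def by (simp add: nth_append)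
  have nw: "(l @ [w]) ! N = w" unfolding N_def by simp
  have lu: "l ! (N - 2) = u" and lv: "l ! (N - 1) = v" using en unfolding ends_def N_def by auto
  have len: "length (l @ [w]) = Suc N" unfolding N_def by simp
  have owE: "\<And>k. Suc k < N \<Longrightarrow> (l ! k, l ! Suc k) \<in> E"
    and owB: "\<And>c. 0 < c \<Longrightarrow> Suc c < N \<Longrightarrow> \<not> BB A (l ! (c - 1), l ! c, l ! Suc c)"
    using ow unfolding owalk_def N_def by auto
  have ffsl: "c \<in> ffs A l \<longleftrightarrow> 0 < c \<and> Suc c < N \<and> FF A (l ! (c - 1), l ! c, l ! Suc c)" for c
    unfolding ffs_def N_def by simp
  show "owalk E A (l @ [w])"
    unfolding owalk_def len
  proof (intro conjI allI impI)
    show "2 \<le> Suc N" using N2 by simp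
  next
    fix k assume k: "Suc k < Suc N"
    show "((l @ [w]) ! k, (l @ [w]) ! Suc k) \<in> E"
    proof (cases "Suc k < N")
      case True then show ?thesis using owE[OF True] nl[of k] nl[of "Suc k"] by simp
    next
      case False then have "k = N - 1" "Suc k = N" using k by auto
      then show ?thesis using nl[of k] nw lv vw N2 by simp
    qed
  next
    fix c assume c: "0 < c" "Suc c < Suc N"
    show "\<not> BB A ((l @ [w]) ! (c - 1), (l @ [w]) ! c, (l @ [w]) ! Suc c)"
    proof (cases "Suc c < N")
      case True then show ?thesis using owB[OF c(1) True] nl[of c] nl[of "c - 1"] nl[of "Suc c"] by simp
    next
      case False then have "c = N - 1" "Suc c = N" "c - 1 = N - 2" using c by auto
      then show ?thesis using nl[of c] nl[of "c - 1"] nw lv lu nb N2 by simp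
    qed
  qed
  show "ends (l @ [w]) v w" unfolding ends_def len using nl[of "N - 1"] nw lv N2 by simp
  show "ffs A (l @ [w]) = ffs A l \<union> (if FF A (u, v, w) then {length l - 1} else {})"
  proof (intro set_eqI iffI)
    fix c assume "c \<in> ffs A (l @ [w])"
    then have c: "0 < c" "Suc c < Suc N" "FF A ((l @ [w]) ! (c - 1), (l @ [w]) ! c, (l @ [w]) ! Suc c)"
      unfolding ffs_def len by auto
    show "c \<in> ffs A l \<union> (if FF A (u, v, w) then {length l - 1} else {})"
    proof (cases "Suc c < N")
      case True then show ?thesis using c ffsl[of c] nl[of c] nl[of "c - 1"] nl[of "Suc c"] by simp
    next
      case False then have "c = N - 1" "Suc c = N" "c - 1 = N - 2" using c by auto
      then show ?thesis using c nl[of c] nl[of "c - 1"] nw lv lu N2 unfolding N_def by simp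
    qed
  next
    fix c assume "c \<in> ffs A l \<union> (if FF A (u, v, w) then {length l - 1} else {})"
    then consider "c \<in> ffs A l" | "FF A (u, v, w)" "c = N - 1" unfolding N_def
      by (auto split: if_splits)
    then show "c \<in> ffs A (l @ [w])"
    proof cases
      case 1
      then have c: "0 < c" "Suc c < N" "FF A (l ! (c - 1), l ! c, l ! Suc c)"
        using ffsl by auto
      then show ?thesis unfolding ffs_def len using nl[of c] nl[of "c - 1"] nl[of "Suc c"] by simp
    next
      case 2
      then have "c - 1 = N - 2" "Suc c = N" "0 < c" using N2 by auto
      then show ?thesis unfolding ffs_def len using 2 nl[of c] nl[of "c - 1"] nw lv lu N2 by simp
    qed
  qed
qed



lemma ffc_bound:
  assumes finE: "finite E" and noGood: "\<And>cs. \<not> Good E A cs" and ow: "owalk E A l"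
  shows "card (ffs A l) \<le> card E"
proof (rule ccontr)
  assume "\<not> card (ffs A l) \<le> card E"
  then have gt: "card E < card (ffs A l)" by simp
  define N where "N = length l"
  have owE: "\<And>k. Suc k < N \<Longrightarrow> (l ! k, l ! Suc k) \<in> E"
    and owB: "\<And>c. 0 < c \<Longrightarrow> Suc c < N \<Longrightarrow> \<not> BB A (l ! (c - 1), l ! c, l ! Suc c)"
    using ow unfolding owalk_def N_def by auto
  have ffsl: "c \<in> ffs A l \<longleftrightarrow> 0 < c \<and> Suc c < N \<and> FF A (l ! (c - 1), l ! c, l ! Suc c)" for c
    unfolding ffs_def N_def by simp
  define \<phi> where "\<phi> c = (l ! c, l ! Suc c)" for c
  have "\<phi> ` ffs A l \<subseteq> E" using owE ffsl unfolding \<phi>_def by auto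
  then have "card (\<phi> ` ffs A l) \<le> card E" using finE card_mono by blast
  then have "\<not> inj_on \<phi> (ffs A l)" using gt pigeonhole by (metis order.strict_trans1)
  then obtain c1 c2 where cc: "c1 \<in> ffs A l" "c2 \<in> ffs A l" "c1 \<noteq> c2" "\<phi> c1 = \<phi> c2"
    unfolding inj_on_def by blast
  then obtain c1 c2 where c: "c1 \<in> ffs A l" "c2 \<in> ffs A l" "c1 < c2" "\<phi> c1 = \<phi> c2"
    by (metis linorder_neqE_nat)
  have c1: "0 < c1" "Suc c1 < N" and c2: "0 < c2" "Suc c2 < N" "FF A (l ! (c2 - 1), l ! c2, l ! Suc c2)"
    using c ffsl by auto
  have e1: "l ! c1 = l ! c2" and e2: "l ! Suc c1 = l ! Suc c2" using c(4) unfolding \<phi>_def by auto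
  define m where "m = c2 - c1"
  define cs where "cs = take m (drop c1 l)"
  have m0: "0 < m" using c m_def by auto
  have lcs: "length cs = m" unfolding cs_def m_def using c2 c N_def by simp
  have ncs: "cs ! k = l ! (c1 + k)" if "k < m" for k
    using that c2 c unfolding cs_def m_def N_def by simp
  have owin: "EW E (l ! (c - 1), l ! c, l ! Suc c) \<and> \<not> BB A (l ! (c - 1), l ! c, l ! Suc c)"
    if "0 < c" "Suc c < N" for c
  proof -
    have "(l ! (c - 1), l ! Suc (c - 1)) \<in> E" using owE[of "c - 1"] that by simp
    then have "(l ! (c - 1), l ! c) \<in> E" using that by simp
    then show ?thesis using owE[of c] owB[of c] that by simp
  qed
  have W0: "W cs 0 = (l ! (c2 - 1), l ! c2, l ! Suc c2)"
  proof -
    have a: "cs ! ((0 + length cs - 1) mod length cs) = l ! (c2 - 1)"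
      unfolding lcs using m0 ncs[of "m - 1"] c unfolding m_def by simp
    have b: "cs ! 0 = l ! c2" using ncs[of 0] m0 e1 by simp
    have d: "cs ! ((0 + 1) mod length cs) = l ! Suc c2"
    proof (cases "m = 1")
      case True
      then have "c2 = Suc c1" using c unfolding m_def by auto
      then show ?thesis unfolding lcs True using ncs[of 0] m0 e1 e2 by simp
    next
      case False
      then have "(0 + 1) mod m = 1" "1 < m" using m0 by auto
      then show ?thesis unfolding lcs using ncs[of 1] e2 by simp
    qed
    show ?thesis unfolding W_def a b d ..
  qed
  have Wk: "W cs k = (l ! (c1 + k - 1), l ! (c1 + k), l ! Suc (c1 + k))" if k: "0 < k" "k < m" for k
  proof -
    have a: "cs ! ((k + length cs - 1) mod length cs) = l ! (c1 + k - 1)"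
    proof -
      have "(k + m - 1) mod m = k - 1" using k by (rule modprev)
      then show ?thesis unfolding lcs using ncs[of "k - 1"] k by simp
    qed
    have b: "cs ! k = l ! (c1 + k)" using ncs k by simp
    have d: "cs ! ((k + 1) mod length cs) = l ! Suc (c1 + k)"
    proof (cases "k + 1 < m")
      case True then show ?thesis unfolding lcs using ncs[of "k + 1"] by simp
    next
      case False then have "k + 1 = m" using k by auto
      then have "c1 + k + 1 = c2" using c unfolding m_def by auto
      then show ?thesis unfolding lcs using \<open>k + 1 = m\<close> ncs[of 0] m0 e1 by simp
    qed
    show ?thesis unfolding W_def a b d ..
  qed
  have allw: "EW E t \<and> \<not> BB A t" if "t \<in> CW cs" for t
  proof -
    from that obtain k where k: "k < m" "t = W cs k" unfolding CW_def lcs by auto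
    show ?thesis
    proof (cases "k = 0")
      case True then show ?thesis using k W0 owin[OF c2(1,2)] by simp
    next
      case False
      then have "0 < c1 + k" "Suc (c1 + k) < N" using k c c2 unfolding m_def by auto
      then show ?thesis using k False Wk[of k] owin[of "c1 + k"] by simp
    qed
  qed
  have "W cs 0 \<in> CW cs" unfolding CW_def lcs using m0 by auto
  then have "Good E A cs" unfolding Good_def using allw W0 c2(3) m0 lcs by fastforce
  then show False using noGood by blast
qed



lemma labeling_exists:
  assumes sg: "simple_graph V E" and ori: "orientation V E A" and noGood: "\<And>cs. \<not> Good E A cs"
  shows "\<exists>f. homogeneous_labeling A f"
proof -
  have finE: "finite E" and symE: "sym E" using sg unfolding simple_graph_def
    by (auto intro: finite_subset[of E "V \<times> V"])
  have AE: "A \<subseteq> E" using ori_facts(1)[OF ori] .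
  note O = ori_facts(3)[OF ori]
  have sE: "(v, u) \<in> E" if "(u, v) \<in> E" for u v using symE that unfolding sym_def by blast
  define S where "S u v = {card (ffs A l) | l. owalk E A l \<and> ends l u v}" for u v
  have finS: "finite (S u v)" for u v
    by (rule finite_subset[of _ "{..card E}"]) (auto simp: S_def intro: ffc_bound[OF finE noGood])
  have neS: "S u v \<noteq> {}" if "(u, v) \<in> A" for u v
  proof -
    have "owalk E A [u, v]" unfolding owalk_def using that AE by (auto simp: less_Suc_eq)
    moreover have "ends [u, v] u v" unfolding ends_def by simp
    ultimately show ?thesis unfolding S_def by blast
  qed
  have sub_card: "card (ffs A l) \<le> card (ffs A (l @ [w]))"
    if "owalk E A l" "ends l u v" "(v, w) \<in> E" "\<not> BB A (u, v, w)" for l u v w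
  proof -
    have "ffs A l \<subseteq> ffs A (l @ [w])" using owalk_snoc(3)[OF that] by auto
    then show ?thesis using ffs_finite by (rule card_mono[rotated])
  qed
  have outle: "Max (S v w) \<le> Max (S v w')" if "(v, w) \<in> A" "(v, w') \<in> A" for v w w'
  proof (rule Max.boundedI[OF finS neS[OF that(1)]])
    fix s assume "s \<in> S v w"
    then obtain l where l: "s = card (ffs A l)" "owalk E A l" "ends l v w" unfolding S_def by auto
    have nb1: "\<not> BB A (v, w, v)" using that O by auto
    have wv: "(w, v) \<in> E" using that AE sE by auto
    have ow1: "owalk E A (l @ [v])" and en1: "ends (l @ [v]) w v"
      using owalk_snoc[OF l(2,3) wv nb1] by auto
    have nb2: "\<not> BB A (w, v, w')" using that O by auto
    have vw': "(v, w') \<in> E" using that AE by auto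
    have ow2: "owalk E A (l @ [v] @ [w'])" and en2: "ends (l @ [v] @ [w']) v w'"
      using owalk_snoc[OF ow1 en1 vw' nb2] by auto
    have "s \<le> card (ffs A (l @ [v] @ [w']))"
      using l(1) sub_card[OF l(2,3) wv nb1] sub_card[OF ow1 en1 vw' nb2] by simp
    also have "\<dots> \<le> Max (S v w')"
      using ow2 en2 finS unfolding S_def by (intro Max_ge) auto
    finally show "s \<le> Max (S v w')" .
  qed
  have inle: "Max (S u v) \<le> Max (S u' v)" if "(u, v) \<in> A" "(u', v) \<in> A" for u u' v
  proof (rule Max.boundedI[OF finS neS[OF that(1)]])
    fix s assume "s \<in> S u v"
    then obtain l where l: "s = card (ffs A l)" "owalk E A l" "ends l u v" unfolding S_def by auto
    have nb1: "\<not> BB A (u, v, u')" using that O by auto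
    have vu': "(v, u') \<in> E" using that AE sE by auto
    have ow1: "owalk E A (l @ [u'])" and en1: "ends (l @ [u']) v u'"
      using owalk_snoc[OF l(2,3) vu' nb1] by auto
    have nb2: "\<not> BB A (v, u', v)" using that O by auto
    have u'v: "(u', v) \<in> E" using that AE by auto
    have ow2: "owalk E A (l @ [u'] @ [v])" and en2: "ends (l @ [u'] @ [v]) u' v"
      using owalk_snoc[OF ow1 en1 u'v nb2] by auto
    have "s \<le> card (ffs A (l @ [u'] @ [v]))"
      using l(1) sub_card[OF l(2,3) vu' nb1] sub_card[OF ow1 en1 u'v nb2] by simp
    also have "\<dots> \<le> Max (S u' v)"
      using ow2 en2 finS unfolding S_def by (intro Max_ge) auto
    finally show "s \<le> Max (S u' v)" .
  qed
  have strict: "Max (S u v) < Max (S v w)" if "(u, v) \<in> A" "(v, w) \<in> A" for u v w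
  proof -
    have "Max (S u v) \<in> S u v" using finS neS[OF that(1)] by (rule Max_in)
    then obtain l where l: "Max (S u v) = card (ffs A l)" "owalk E A l" "ends l u v"
      unfolding S_def by auto
    have nb: "\<not> BB A (u, v, w)" using that O by auto
    have vw: "(v, w) \<in> E" using that AE by auto
    have ff: "FF A (u, v, w)" using that by simp
    have ow1: "owalk E A (l @ [w])" and en1: "ends (l @ [w]) v w"
      and fe: "ffs A (l @ [w]) = ffs A l \<union> {length l - 1}"
      using owalk_snoc[OF l(2,3) vw nb] ff by auto
    have "length l - 1 \<notin> ffs A l" unfolding ffs_def by auto
    then have "card (ffs A (l @ [w])) = Suc (card (ffs A l))" using fe ffs_finite[of A l] by simp
    moreover have "card (ffs A (l @ [w])) \<le> Max (S v w)"
      using ow1 en1 finS unfolding S_def by (intro Max_ge) auto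
    ultimately show ?thesis using l(1) by simp
  qed
  define f where "f = (\<lambda>(u, v). real (Max (S u v)))"
  have "homogeneous_labeling A f"
    unfolding homogeneous_labeling_def f_def
  proof (intro allI conjI impI)
    fix v w w' assume "(v, w) \<in> A" "(v, w') \<in> A"
    then show "(case (v, w) of (u, v) \<Rightarrow> real (Max (S u v))) = (case (v, w') of (u, v) \<Rightarrow> real (Max (S u v)))"
      using outle by (simp add: order_antisym)
  next
    fix v u u' assume "(u, v) \<in> A" "(u', v) \<in> A"
    then show "(case (u, v) of (u, v) \<Rightarrow> real (Max (S u v))) = (case (u', v) of (u, v) \<Rightarrow> real (Max (S u v)))"
      using inle by (simp add: order_antisym)
  next
    fix v u w assume "(u, v) \<in> A" "(v, w) \<in> A"
    then show "(case (u, v) of (u, v) \<Rightarrow> real (Max (S u v))) < (case (v, w) of (u, v) \<Rightarrow> real (Max (S u v)))"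
      using strict by simp
  qed
  then show ?thesis by blast
qed

theorem mainTheorem14:
  fixes V :: "'a set" and E A :: "('a \<times> 'a) set"
  assumes "simple_graph V E" and "orientation V E A"
  shows "(\<exists>f. homogeneous_labeling A f) \<longleftrightarrow>
         \<not> (\<exists>cs. set cs \<subseteq> V \<and> is_cycle E cs \<and> badly_oriented A cs)"
proof
  have symE: "sym E" and irr: "irrefl E" using assms(1) unfolding simple_graph_def by auto
  show "\<exists>f. homogeneous_labeling A f \<Longrightarrow> \<not> (\<exists>cs. set cs \<subseteq> V \<and> is_cycle E cs \<and> badly_oriented A cs)"
    using necessity[OF assms(2) symE] by blast
  assume nb: "\<not> (\<exists>cs. set cs \<subseteq> V \<and> is_cycle E cs \<and> badly_oriented A cs)"
  have "\<not> Good E A cs" for cs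
  proof
    assume "Good E A cs"
    then obtain cs' where "Good E A cs'" "distinct cs'" using extract_cycle[OF assms(2) symE irr] by blast
    then show False using good_cycle[OF assms] nb by blast
  qed
  then show "\<exists>f. homogeneous_labeling A f" using labeling_exists[OF assms] by blast
qed

end
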